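(* Let $\mathbb{A}$ be an epistemic Heyting algebra, let $\mathbb{E}=(E,(\sim_i),(P_i),\Phi,\mathsf{pre})$ be a probabilistic event structure over $\mathbb{A}$, and let $\mathbb{A}'=\prod_{\mathbb{E}}\mathbb{A}$ be the intermediate algebra. For every agent $i\in\mathsf{Ag}$, $$\mathsf{Min}_i(\mathbb{A}')=\{f_{e,a}\mid e\in E\text{ and }a\in\mathsf{Min}_i(\mathbb{A})\},$$ where for $e\in E$ and $a\in\mathsf{Min}_i(\mathbb{A})$, $f_{e,a}:E\to\mathbb{A}$ is given by $f_{e,a}(e')=a$ if $e'\sim_i e$ and $f_{e,a}(e')=\bot$ otherwise.
   Context: Fix a set $\mathsf{Ag}$ of agents. A monadic Heyting algebra is a Heyting algebra $\mathbb{L}$ with, for each $i\in\mathsf{Ag}$, monotone unary operations $\lozenge_i,\Box_i$ such that for all $a,b$: $a\leq\lozenge_i a$; $\Box_i a\leq a$; $\lozenge_i(a\vee b)\leq\lozenge_i a\vee\lozenge_i b$; $\Box_i(a\to b)\leq\Box_i a\to\Box_i b$; $\lozenge_i a\leq\Box_i\lozenge_i a$; $\lozenge_i\Box_i a\leq\Box_i a$; $\Box_i(a\to b)\leq\lozenge_i a\to\lozenge_i b$; $\lozenge_i\bot\leq\bot$; $\top\leq\Box_i\top$. An epistemic Heyting algebra is a finite monadic Heyting algebra with $\lozenge_i a\vee\neg\lozenge_i a=\top$ for all $i,a$. An element $a$ is $i$-minimal if $a\neq\bot$, $\lozenge_i a=a$, and whenever $b<a$ and $\lozenge_i b=b$ then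 $b=\bot$; $\mathsf{Min}_i(\mathbb{A})$ is the set of $i$-minimal elements. A pre-ordered multiset on a set $X$ is a multiset of elements of $X$ in which the copies $x_1,\dots,x_n$ of any element carry the linear order $x_1\prec\cdots\prec x_n$. A probabilistic event structure over $\mathbb{A}$ is a tuple $(E,(\sim_i),(P_i),\Phi,\mathsf{pre})$ where: $E$ is a non-empty finite set; each $\sim_i$ is an equivalence relation on $E$; each $P_i:E\to\,]0,1]$ satisfies $\sum\{P_i(e')\mid e'\sim_i e\}=1$; $\Phi$ is a finite pre-ordered multiset on $\mathbb{A}$ such that any $a,b\in\Phi$ arising from distinct elements satisfy $a\wedge b=\bot$ or $a<b$ or $b<a$; $\mathsf{pre}(\bullet\mid a)$ is a probability distribution on $E$ for each $a\in\Phi$; and if $\mathsf{pre}(e\mid a)=0$ then $\mathsf{pre}(e\mid b)=0$ for all $b\in\Phi$ with $a<b$ (distinct elements) or $a\prec b$ (copies of the same element). The intermediate algebra $\mathbb{A}'=\prod_{\mathbb{E}}\mathbb{A}$ has as carrier all maps $f:E\to\mathbb{A}$ with pointwise Heyting operations, and $(\lozenge'_i f)(e)=\bigvee\{\lozenge_i f(e')\mid e'\sim_i e\}$, $(\Box'_i f)(e)=\bigwedge\{\Box_i f(e')\mid e'\sim_i e\}$; $i$-minimality in $\mathbb{A}'$ is with respect to $\lozenge'_i$. *)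

theory Defs
  imports Complex_Main "HOL-Library.Multiset"
begin

(* Heyting algebra: a (finite, hence complete) lattice with an implication
   characterised by residuation  inf x y \<le> z \<longleftrightarrow> x \<le> (y -> z). *)
definition heyting_imp :: "('a::complete_lattice \<Rightarrow> 'a \<Rightarrow> 'a) \<Rightarrow> bool" where
  "heyting_imp imp \<longleftrightarrow> (\<forall>x y z. inf x y \<le> z \<longleftrightarrow> x \<le> imp y z)"

definition monadic_heyting ::
  "('a::complete_lattice \<Rightarrow> 'a \<Rightarrow> 'a) \<Rightarrow> ('i \<Rightarrow> 'a \<Rightarrow> 'a) \<Rightarrow> ('i \<Rightarrow> 'a \<Rightarrow> 'a) \<Rightarrow> bool" where
  "monadic_heyting imp dia box \<longleftrightarrow> heyting_imp imp \<and>
     (\<forall>i. mono (dia i) \<and> mono (box i) \<and>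
       (\<forall>a b. a \<le> dia i a \<and> box i a \<le> a \<and>
              dia i (sup a b) \<le> sup (dia i a) (dia i b) \<and>
              box i (imp a b) \<le> imp (box i a) (box i b) \<and>
              dia i a \<le> box i (dia i a) \<and>
              dia i (box i a) \<le> box i a \<and>
              box i (imp a b) \<le> imp (dia i a) (dia i b)) \<and>
       dia i bot \<le> bot \<and> top \<le> box i top)"

definition epistemic_heyting ::
  "('a::{finite,complete_lattice} \<Rightarrow> 'a \<Rightarrow> 'a) \<Rightarrow> ('i \<Rightarrow> 'a \<Rightarrow> 'a) \<Rightarrow> ('i \<Rightarrow> 'a \<Rightarrow> 'a) \<Rightarrow> bool" where
  "epistemic_heyting imp dia box \<longleftrightarrow> monadic_heyting imp dia box \<and>
     (\<forall>i a. sup (dia i a) (imp (dia i a) bot) = top)"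

definition Min_i :: "('i \<Rightarrow> 'a::complete_lattice \<Rightarrow> 'a) \<Rightarrow> 'i \<Rightarrow> 'a set" where
  "Min_i dia i = {a. a \<noteq> bot \<and> dia i a = a \<and> (\<forall>b. b < a \<and> dia i b = b \<longrightarrow> b = bot)}"

(* The pre-ordered multiset \<Phi> is an 'a multiset;
   the copies of an element a are (a,0) \<prec> (a,1) \<prec> ... \<prec> (a, count \<Phi> a - 1),
   and pre (a,k) is the distribution attached to the k-th copy of a. *)
definition prob_event_structure ::
  "'e set \<Rightarrow> ('i \<Rightarrow> ('e \<times> 'e) set) \<Rightarrow> ('i \<Rightarrow> 'e \<Rightarrow> real) \<Rightarrow> 'a::complete_lattice multiset
   \<Rightarrow> ('a \<times> nat \<Rightarrow> 'e \<Rightarrow> real) \<Rightarrow> bool" where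
  "prob_event_structure E sim P \<Phi> pre \<longleftrightarrow>
     E \<noteq> {} \<and> finite E \<and>
     (\<forall>i. equiv E (sim i)) \<and>
     (\<forall>i. \<forall>e\<in>E. 0 < P i e \<and> P i e \<le> 1 \<and> (\<Sum>e'\<in>{e'\<in>E. (e', e) \<in> sim i}. P i e') = 1) \<and>
     (\<forall>a\<in>set_mset \<Phi>. \<forall>b\<in>set_mset \<Phi>. a \<noteq> b \<longrightarrow> inf a b = bot \<or> a < b \<or> b < a) \<and>
     (\<forall>a k. k < count \<Phi> a \<longrightarrow> (\<forall>e\<in>E. 0 \<le> pre (a, k) e) \<and> (\<Sum>e\<in>E. pre (a, k) e) = 1) \<and>
     (\<forall>a k b l. k < count \<Phi> a \<and> l < count \<Phi> b \<and> ((a \<noteq> b \<and> a < b) \<or> (a = b \<and> k < l)) \<longrightarrow>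
        (\<forall>e\<in>E. pre (a, k) e = 0 \<longrightarrow> pre (b, l) e = 0))"

(* Intermediate algebra: maps E -> A, represented as functions 'e \<Rightarrow> 'a that are bot outside E;
   Heyting operations and order are pointwise. *)
definition int_carrier :: "'e set \<Rightarrow> ('e \<Rightarrow> 'a::complete_lattice) set" where
  "int_carrier E = {f. \<forall>e. e \<notin> E \<longrightarrow> f e = bot}"

definition dia' :: "'e set \<Rightarrow> ('i \<Rightarrow> ('e \<times> 'e) set) \<Rightarrow> ('i \<Rightarrow> 'a::complete_lattice \<Rightarrow> 'a)
   \<Rightarrow> 'i \<Rightarrow> ('e \<Rightarrow> 'a) \<Rightarrow> ('e \<Rightarrow> 'a)" where
  "dia' E sim dia i f = (\<lambda>e. if e \<in> E then Sup {dia i (f e') | e'. (e', e) \<in> sim i} else bot)"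

definition box' :: "'e set \<Rightarrow> ('i \<Rightarrow> ('e \<times> 'e) set) \<Rightarrow> ('i \<Rightarrow> 'a::complete_lattice \<Rightarrow> 'a)
   \<Rightarrow> 'i \<Rightarrow> ('e \<Rightarrow> 'a) \<Rightarrow> ('e \<Rightarrow> 'a)" where
  "box' E sim box i f = (\<lambda>e. if e \<in> E then Inf {box i (f e') | e'. (e', e) \<in> sim i} else bot)"

definition Min_i' :: "'e set \<Rightarrow> ('i \<Rightarrow> ('e \<times> 'e) set) \<Rightarrow> ('i \<Rightarrow> 'a::complete_lattice \<Rightarrow> 'a)
   \<Rightarrow> 'i \<Rightarrow> ('e \<Rightarrow> 'a) set" where
  "Min_i' E sim dia i = {f \<in> int_carrier E. f \<noteq> (\<lambda>_. bot) \<and> dia' E sim dia i f = f \<and>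
      (\<forall>g \<in> int_carrier E. g < f \<and> dia' E sim dia i g = g \<longrightarrow> g = (\<lambda>_. bot))}"

definition f_ea :: "('i \<Rightarrow> ('e \<times> 'e) set) \<Rightarrow> 'i \<Rightarrow> 'e \<Rightarrow> 'a::complete_lattice \<Rightarrow> ('e \<Rightarrow> 'a)" where
  "f_ea sim i e a = (\<lambda>e'. if (e', e) \<in> sim i then a else bot)"

end

theory Submission
  imports Defs
begin

lemma eqv:
  assumes eq: "equiv E S"
  shows "\<And>e. e \<in> E \<Longrightarrow> (e, e) \<in> S"
    and "\<And>x y. (x, y) \<in> S \<Longrightarrow> (y, x) \<in> S"
    and "\<And>x y z. (x, y) \<in> S \<Longrightarrow> (y, z) \<in> S \<Longrightarrow> (x, z) \<in> S"
    and "\<And>x y. (x, y) \<in> S \<Longrightarrow> x \<in> E"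
    and "\<And>x y. (x, y) \<in> S \<Longrightarrow> y \<in> E"
proof -
  have r: "refl_on E S" and s: "sym S" and t: "trans S" using eq unfolding equiv_def by auto
  show "\<And>e. e \<in> E \<Longrightarrow> (e, e) \<in> S" using r by (rule refl_onD)
  show "\<And>x y. (x, y) \<in> S \<Longrightarrow> (y, x) \<in> S" using s by (rule symD)
  show "\<And>x y z. (x, y) \<in> S \<Longrightarrow> (y, z) \<in> S \<Longrightarrow> (x, z) \<in> S" using t by (rule transD)
  show "\<And>x y. (x, y) \<in> S \<Longrightarrow> x \<in> E" using equiv_type[OF eq] by blast
  show "\<And>x y. (x, y) \<in> S \<Longrightarrow> y \<in> E" using equiv_type[OF eq] by blast
qed

lemma fix_pt:
  fixes g :: "'e \<Rightarrow> 'a::complete_lattice"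
  assumes eq: "equiv E S" and ext: "\<And>a. a \<le> d a"
    and fx: "(\<lambda>e. if e \<in> E then Sup {d (g e') | e'. (e', e) \<in> S} else bot) = g"
    and e0: "e0 \<in> E"
  shows "d (g e0) = g e0" "\<And>e1. (e1, e0) \<in> S \<Longrightarrow> g e1 = g e0"
proof -
  have ge: "g e = Sup {d (g e') | e'. (e', e) \<in> S}" if "e \<in> E" for e
    using fun_cong[OF fx, of e] that by simp
  have "(e0,e0) \<in> S" using eqv(1)[OF eq e0] .
  hence "d (g e0) \<in> {d (g e') | e'. (e', e0) \<in> S}" by blast
  hence "d (g e0) \<le> Sup {d (g e') | e'. (e', e0) \<in> S}" by (rule Sup_upper)
  hence "d (g e0) \<le> g e0" using ge[OF e0] by simp
  thus "d (g e0) = g e0" using ext[of "g e0"] by (rule antisym)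
  fix e1 assume h: "(e1, e0) \<in> S"
  have e1: "e1 \<in> E" using eqv(4)[OF eq h] .
  have "\<And>x. (x, e1) \<in> S \<longleftrightarrow> (x, e0) \<in> S"
    using eqv(2,3)[OF eq] h by metis
  hence "{d (g e') | e'. (e', e1) \<in> S} = {d (g e') | e'. (e', e0) \<in> S}" by simp
  thus "g e1 = g e0" using ge[OF e0] ge[OF e1] by simp
qed

lemma fea_fix:
  fixes c :: "'a::complete_lattice"
  assumes eq: "equiv E (sim i)" and bot: "dia i bot = bot"
    and e: "e \<in> E" and c: "dia i c = c"
  shows "dia' E sim dia i (f_ea sim i e c) = f_ea sim i e c"
proof
  fix e0
  show "dia' E sim dia i (f_ea sim i e c) e0 = f_ea sim i e c e0"
  proof (cases "e0 \<in> E")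
    case False
    hence "(e0, e) \<notin> sim i" using eqv(4)[OF eq] by blast
    thus ?thesis using False by (simp add: dia'_def f_ea_def)
  next
    case True
    have r: "(e0,e0) \<in> sim i" using eqv(1)[OF eq True] .
    show ?thesis
    proof (cases "(e0, e) \<in> sim i")
      case T: True
      have tr: "\<And>e'. (e', e0) \<in> sim i \<Longrightarrow> (e', e) \<in> sim i"
        using eqv(3)[OF eq] T by blast
      have "{dia i (f_ea sim i e c e') | e'. (e', e0) \<in> sim i} = {c}"
      proof (rule set_eqI, rule iffI)
        fix x assume "x \<in> {dia i (f_ea sim i e c e') | e'. (e', e0) \<in> sim i}"
        then obtain e' where "(e', e0) \<in> sim i" "x = dia i (f_ea sim i e c e')" by blast
        thus "x \<in> {c}" using tr c by (simp add: f_ea_def)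
      next
        fix x assume "x \<in> {c}"
        hence "x = dia i (f_ea sim i e c e0)" using T c by (simp add: f_ea_def)
        thus "x \<in> {dia i (f_ea sim i e c e') | e'. (e', e0) \<in> sim i}" using r by blast
      qed
      thus ?thesis using True T by (simp add: dia'_def f_ea_def)
    next
      case F: False
      have nt: "\<And>e'. (e', e0) \<in> sim i \<Longrightarrow> (e', e) \<notin> sim i"
        using eqv(2,3)[OF eq] F by blast
      have "{dia i (f_ea sim i e c e') | e'. (e', e0) \<in> sim i} = {bot}"
      proof (rule set_eqI, rule iffI)
        fix x assume "x \<in> {dia i (f_ea sim i e c e') | e'. (e', e0) \<in> sim i}"
        then obtain e' where "(e', e0) \<in> sim i" "x = dia i (f_ea sim i e c e')" by blast
        thus "x \<in> {bot}" using nt bot by (simp add: f_ea_def)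
      next
        fix x assume "x \<in> {bot::'a}"
        hence "x = dia i (f_ea sim i e c e0)" using F bot by (simp add: f_ea_def)
        thus "x \<in> {dia i (f_ea sim i e c e') | e'. (e', e0) \<in> sim i}" using r by blast
      qed
      thus ?thesis using True F by (simp add: dia'_def f_ea_def)
    qed
  qed
qed

theorem proposition4:
  fixes imp :: "'a::{finite,complete_lattice} \<Rightarrow> 'a \<Rightarrow> 'a"
    and dia box :: "'i \<Rightarrow> 'a \<Rightarrow> 'a"
    and E :: "'e set" and sim :: "'i \<Rightarrow> ('e \<times> 'e) set" and P :: "'i \<Rightarrow> 'e \<Rightarrow> real"
    and \<Phi> :: "'a multiset" and pre :: "'a \<times> nat \<Rightarrow> 'e \<Rightarrow> real"
  assumes "epistemic_heyting imp dia box"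
    and "prob_event_structure E sim P \<Phi> pre"
  shows "Min_i' E sim dia i = {f_ea sim i e a | e a. e \<in> E \<and> a \<in> Min_i dia i}"
proof -
  have mh: "monadic_heyting imp dia box" using assms(1) unfolding epistemic_heyting_def by blast
  have ext: "\<And>a. a \<le> dia i a"
  proof -
    fix a show "a \<le> dia i a" using mh unfolding monadic_heyting_def by blast
  qed
  have "dia i bot \<le> bot" using mh unfolding monadic_heyting_def by blast
  hence bot: "dia i bot = bot" by (simp add: bot_unique)
  have eq: "equiv E (sim i)" using assms(2) unfolding prob_event_structure_def by (elim conjE) (erule allE)
  have carr: "\<And>e c. e \<in> E \<Longrightarrow> f_ea sim i e c \<in> int_carrier E"
    using eqv(4)[OF eq] by (auto simp: int_carrier_def f_ea_def)
  have fixp: "\<And>g e0. dia' E sim dia i g = g \<Longrightarrow> e0 \<in> E \<Longrightarrow> dia i (g e0) = g e0"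
    using fix_pt(1)[OF eq ext] unfolding dia'_def by blast
  have const: "\<And>g e0 e1. dia' E sim dia i g = g \<Longrightarrow> e0 \<in> E \<Longrightarrow> (e1, e0) \<in> sim i \<Longrightarrow> g e1 = g e0"
    using fix_pt(2)[OF eq ext] unfolding dia'_def by blast
  have refl: "\<And>e. e \<in> E \<Longrightarrow> (e, e) \<in> sim i" using eqv(1)[OF eq] .
  have symm: "\<And>x y. (x, y) \<in> sim i \<Longrightarrow> (y, x) \<in> sim i" using eqv(2)[OF eq] .
  show ?thesis
  proof (intro set_eqI iffI)
    fix f assume "f \<in> Min_i' E sim dia i"
    hence fc: "f \<in> int_carrier E" and fnb: "f \<noteq> (\<lambda>_. bot)" and ff: "dia' E sim dia i f = f"
      and fmin: "\<And>g. g \<in> int_carrier E \<Longrightarrow> g < f \<Longrightarrow> dia' E sim dia i g = g \<Longrightarrow> g = (\<lambda>_. bot)"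
      unfolding Min_i'_def by auto
    obtain e where fe: "f e \<noteq> bot" using fnb by auto
    have eE: "e \<in> E" using fc fe unfolding int_carrier_def by auto
    define b where "b = f e"
    have bfix: "dia i b = b" using fixp[OF ff eE] b_def by simp
    have fg: "f = f_ea sim i e b"
    proof (rule ccontr)
      assume ne: "f \<noteq> f_ea sim i e b"
      have le: "f_ea sim i e b \<le> f"
        using const[OF ff eE] by (auto simp: le_fun_def f_ea_def b_def)
      have "f_ea sim i e b = (\<lambda>_. bot)"
        using fmin[OF carr[OF eE]] le ne fea_fix[where E=E and sim=sim and i=i and dia=dia, OF eq bot eE bfix] by auto
      hence "b = bot" using refl[OF eE] by (metis f_ea_def)
      thus False using fe b_def by simp
    qed
    have "b \<in> Min_i dia i"
      unfolding Min_i_def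
    proof (intro CollectI conjI allI impI)
      show "b \<noteq> bot" using fe b_def by simp
      show "dia i b = b" by fact
      fix c assume c: "c < b \<and> dia i c = c"
      have "f_ea sim i e c < f"
        unfolding fg using c refl[OF eE]
        by (auto simp: less_fun_def le_fun_def f_ea_def)
      hence "f_ea sim i e c = (\<lambda>_. bot)"
        using fmin[OF carr[OF eE]] fea_fix[where E=E and sim=sim and i=i and dia=dia, OF eq bot eE] c by auto
      thus "c = bot" using refl[OF eE] by (metis f_ea_def)
    qed
    thus "f \<in> {f_ea sim i e a | e a. e \<in> E \<and> a \<in> Min_i dia i}" using fg eE by blast
  next
    fix f assume "f \<in> {f_ea sim i e a | e a. e \<in> E \<and> a \<in> Min_i dia i}"
    then obtain e a where eE: "e \<in> E" and a: "a \<in> Min_i dia i" and fd: "f = f_ea sim i e a" by blast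
    have anb: "a \<noteq> bot" and afix: "dia i a = a"
      and amin: "\<And>c. c < a \<Longrightarrow> dia i c = c \<Longrightarrow> c = bot"
      using a unfolding Min_i_def by auto
    have ff: "dia' E sim dia i f = f" using fea_fix[where E=E and sim=sim and i=i and dia=dia, OF eq bot eE afix] fd by simp
    have fnb: "f \<noteq> (\<lambda>_. bot)" using fd refl[OF eE] anb by (metis f_ea_def)
    have "\<And>g. g \<in> int_carrier E \<Longrightarrow> g < f \<Longrightarrow> dia' E sim dia i g = g \<Longrightarrow> g = (\<lambda>_. bot)"
    proof -
      fix g assume gc: "g \<in> int_carrier E" and gl: "g < f" and gf: "dia' E sim dia i g = g"
      have gle: "\<And>x. g x \<le> f x" using gl by (simp add: less_fun_def le_fun_def)
      have gea: "g e \<le> a" using gle[of e] fd refl[OF eE] by (simp add: f_ea_def)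
      show "g = (\<lambda>_. bot)"
      proof (cases "g e = a")
        case True
        have "f \<le> g"
        proof (rule le_funI)
          fix x show "f x \<le> g x"
          proof (cases "(x, e) \<in> sim i")
            case True
            thus ?thesis using const[OF gf eE True] \<open>g e = a\<close> fd by (simp add: f_ea_def)
          qed (simp add: fd f_ea_def)
        qed
        thus ?thesis using gl by (simp add: less_fun_def)
      next
        case False
        hence "g e = bot" using amin[of "g e"] gea fixp[OF gf eE] by simp
        show ?thesis
        proof
          fix x show "g x = bot"
          proof (cases "(x, e) \<in> sim i")
            case True
            thus ?thesis using const[OF gf eE True] \<open>g e = bot\<close> by simp
          next
            case False
            thus ?thesis using gle[of x] fd by (simp add: f_ea_def bot_unique)
          qed
        qed
      qed
    qed
    thus "f \<in> Min_i' E sim dia i"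
      unfolding Min_i'_def using carr[OF eE] fd ff fnb by auto
  qed
qed

end
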